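(* Let $X$ be a complete nonsingular toric variety which is Fano and all of whose toric subvarieties are Fano. If a ray generator $\rho$ of the fan of $X$ is equal to a nonnegative linear combination of ray generators other than $\rho$, then the toric divisor $D$ associated to $\rho$ is exceptional.
   Context: For such $X$ (fan $\Delta$ in $N_{\mathbb R}$, ray generators $\rho$ corresponding to toric divisors $D$), a primitive set is a set $\{D_1,\ldots,D_k\}$ of toric divisors with empty intersection such that every proper subset has nonempty intersection (equivalently, $\rho_1,\ldots,\rho_k$ do not span a cone but every proper subset does). For these $X$, every primitive set satisfies either $\rho_1+\cdots+\rho_k=0$ or $\rho_1+\cdots+\rho_k=\widehat\rho$ for a ray generator $\widehat\rho$. A toric divisor $\widehat D$ is called exceptional if $\rho_1+\cdots+\rho_k=\widehat\rho$ for some primitive set $\{D_1,\ldots,D_k\}$. *)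

theory Defs
  imports "HOL-Analysis.Analysis"
begin

text \<open>The lattice N is the integer points of N_R = real^'n; dim N = CARD('n).
  A fan is given by its finite set R of ray generators and the set Sigma of its cones,
  each cone being identified with the (finite) set of ray generators spanning it.\<close>

definition int_vec :: "real^'n \<Rightarrow> bool" where
  "int_vec x \<longleftrightarrow> (\<forall>i. x $ i \<in> \<int>)"

definition pos_hull :: "(real^'n) set \<Rightarrow> (real^'n) set" where
  "pos_hull S = {\<Sum>v\<in>S. c v *\<^sub>R v | c. \<forall>v\<in>S. c v \<ge> 0}"

definition lattice_basis :: "(real^'n) set \<Rightarrow> bool" where
  "lattice_basis B \<longleftrightarrow> finite B \<and> independent B \<and> card B = CARD('n) \<and>
     (\<forall>v\<in>B. int_vec v) \<and>
     (\<forall>x. int_vec x \<longrightarrow> (\<exists>c. (\<forall>v\<in>B. c v \<in> \<int>) \<and> x = (\<Sum>v\<in>B. c v *\<^sub>R v)))"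

text \<open>Fan of a complete nonsingular toric variety: every cone is a face of a maximal cone
  whose generators form a lattice basis (smoothness), cones meet along common faces (fan),
  and the cones cover N_R (completeness).\<close>
definition smooth_complete_fan :: "(real^'n) set \<Rightarrow> (real^'n) set set \<Rightarrow> bool" where
  "smooth_complete_fan R \<Sigma> \<longleftrightarrow>
     finite R \<and> (\<forall>\<rho>\<in>R. int_vec \<rho>) \<and>
     \<Sigma> \<subseteq> Pow R \<and> {} \<in> \<Sigma> \<and> (\<forall>\<rho>\<in>R. {\<rho>} \<in> \<Sigma>) \<and>
     (\<forall>C\<in>\<Sigma>. \<forall>C'. C' \<subseteq> C \<longrightarrow> C' \<in> \<Sigma>) \<and>
     (\<forall>C\<in>\<Sigma>. \<exists>\<sigma>\<in>\<Sigma>. C \<subseteq> \<sigma> \<and> lattice_basis \<sigma>) \<and>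
     (\<forall>C\<in>\<Sigma>. \<forall>C'\<in>\<Sigma>. pos_hull C \<inter> pos_hull C' = pos_hull (C \<inter> C')) \<and>
     (\<Union>C\<in>\<Sigma>. pos_hull C) = UNIV"

definition max_cone :: "(real^'n) set set \<Rightarrow> (real^'n) set \<Rightarrow> bool" where
  "max_cone \<Sigma> \<sigma> \<longleftrightarrow> \<sigma> \<in> \<Sigma> \<and> card \<sigma> = CARD('n)"

text \<open>The orbit closure V(tau) (a smooth complete toric variety with fan Star(tau) in
  N/span(tau)) is Fano: its anticanonical divisor is ample, i.e. the support function is
  strictly convex.\<close>
definition orbit_closure_fano :: "(real^'n) set \<Rightarrow> (real^'n) set set \<Rightarrow> (real^'n) set \<Rightarrow> bool" where
  "orbit_closure_fano R \<Sigma> \<tau> \<longleftrightarrow>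
     (\<forall>\<sigma>. max_cone \<Sigma> \<sigma> \<and> \<tau> \<subseteq> \<sigma> \<longrightarrow>
        (\<exists>m::real^'n. (\<forall>\<rho>\<in>\<tau>. m \<bullet> \<rho> = 0) \<and> (\<forall>\<rho>\<in>\<sigma> - \<tau>. m \<bullet> \<rho> = 1) \<and>
           (\<forall>\<rho>\<in>R. \<rho> \<notin> \<sigma> \<and> insert \<rho> \<tau> \<in> \<Sigma> \<longrightarrow> m \<bullet> \<rho> < 1)))"

definition toric_fano :: "(real^'n) set \<Rightarrow> (real^'n) set set \<Rightarrow> bool" where
  "toric_fano R \<Sigma> \<longleftrightarrow> orbit_closure_fano R \<Sigma> {}"

definition all_toric_subvarieties_fano :: "(real^'n) set \<Rightarrow> (real^'n) set set \<Rightarrow> bool" where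
  "all_toric_subvarieties_fano R \<Sigma> \<longleftrightarrow> (\<forall>\<tau>\<in>\<Sigma>. orbit_closure_fano R \<Sigma> \<tau>)"

definition primitive_set :: "(real^'n) set \<Rightarrow> (real^'n) set set \<Rightarrow> (real^'n) set \<Rightarrow> bool" where
  "primitive_set R \<Sigma> P \<longleftrightarrow> P \<subseteq> R \<and> P \<notin> \<Sigma> \<and> (\<forall>Q. Q \<subset> P \<longrightarrow> Q \<in> \<Sigma>)"

definition exceptional :: "(real^'n) set \<Rightarrow> (real^'n) set set \<Rightarrow> real^'n \<Rightarrow> bool" where
  "exceptional R \<Sigma> \<rho> \<longleftrightarrow> \<rho> \<in> R \<and> (\<exists>P. primitive_set R \<Sigma> P \<and> (\<Sum>v\<in>P. v) = \<rho>)"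

end

theory Submission
  imports Defs
begin

lemma uniq_coeffs:
  fixes B :: "(real^'n) set"
  assumes "finite B" "independent B" "(\<Sum>v\<in>B. f v *\<^sub>R v) = (\<Sum>v\<in>B. g v *\<^sub>R v)" "v \<in> B"
  shows "f v = g v"
proof (rule ccontr)
  assume ne: "f v \<noteq> g v"
  have "(\<Sum>v\<in>B. (f v - g v) *\<^sub>R v) = 0"
    using assms(3) by (simp add: scaleR_diff_left sum_subtractf)
  then have "dependent B"
    using assms(1,4) ne by (subst dependent_finite[OF assms(1)]) (auto intro!: exI[of _ "\<lambda>v. f v - g v"])
  then show False using assms(2) by simp
qed

lemma int_vec_sum:
  assumes "\<forall>x\<in>P. int_vec x"
  shows "int_vec (\<Sum>x\<in>P. x)"
  using assms unfolding int_vec_def by (auto simp: sum_component intro!: Ints_sum)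

lemma extend_sum:
  fixes d :: "'a \<Rightarrow> real" and S :: "'a set"
  assumes "finite S" "D \<subseteq> S"
  shows "(\<Sum>v\<in>S. (if v \<in> D then d v else 0) *\<^sub>R (h v::'b::real_vector)) = (\<Sum>v\<in>D. d v *\<^sub>R h v)"
proof -
  have "(\<Sum>v\<in>S. (if v \<in> D then d v else 0) *\<^sub>R h v) = (\<Sum>v\<in>S. (if v \<in> D then d v *\<^sub>R h v else 0))"
    by (rule sum.cong) auto
  also have "\<dots> = (\<Sum>v\<in>S \<inter> D. d v *\<^sub>R h v)"
    using assms(1) by (simp add: sum.inter_restrict)
  also have "S \<inter> D = D" using assms(2) by auto
  finally show ?thesis .
qed

lemma basis_coords:
  fixes \<sigma> :: "(real^'n) set"
  assumes "lattice_basis \<sigma>"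
  shows "\<exists>f. x = (\<Sum>v\<in>\<sigma>. f v *\<^sub>R v)"
proof -
  have fin: "finite \<sigma>" and ind: "independent \<sigma>" and cd: "card \<sigma> = CARD('n)"
    using assms unfolding lattice_basis_def by auto
  have "dim \<sigma> = DIM(real^'n)" using dim_eq_card_independent[OF ind] cd by simp
  then have "span \<sigma> = UNIV" using dim_eq_full by blast
  then have "x \<in> range (\<lambda>u. \<Sum>v\<in>\<sigma>. u v *\<^sub>R v)" using span_finite[OF fin] by auto
  then show ?thesis by auto
qed

lemma basis_int_coords:
  fixes \<sigma> :: "(real^'n) set"
  assumes "lattice_basis \<sigma>" "int_vec p" "D \<subseteq> \<sigma>" "p = (\<Sum>v\<in>D. d v *\<^sub>R v)" "v \<in> D"
  shows "d v \<in> \<int>"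
proof -
  have fin: "finite \<sigma>" and ind: "independent \<sigma>"
    using assms unfolding lattice_basis_def by auto
  obtain c where c: "\<forall>v\<in>\<sigma>. c v \<in> \<int>" "p = (\<Sum>v\<in>\<sigma>. c v *\<^sub>R v)"
    using assms(1,2) unfolding lattice_basis_def by blast
  have "p = (\<Sum>v\<in>\<sigma>. (if v \<in> D then d v else 0) *\<^sub>R v)"
    using extend_sum[OF fin assms(3), of d "\<lambda>v. v"] assms(4) by simp
  then have "(if v \<in> D then d v else 0) = c v"
    using uniq_coeffs[OF fin ind, of "\<lambda>v. if v \<in> D then d v else 0" c v] c assms(3,5) by auto
  then show ?thesis using c assms(3,5) by auto
qed


context
  fixes R :: "(real^'n) set" and \<Sigma> :: "(real^'n) set set"
  assumes fan: "smooth_complete_fan R \<Sigma>"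
begin

lemma fanD: "finite R \<and> (\<forall>\<rho>\<in>R. int_vec \<rho>) \<and>
     \<Sigma> \<subseteq> Pow R \<and> {} \<in> \<Sigma> \<and> (\<forall>\<rho>\<in>R. {\<rho>} \<in> \<Sigma>) \<and>
     (\<forall>C\<in>\<Sigma>. \<forall>C'. C' \<subseteq> C \<longrightarrow> C' \<in> \<Sigma>) \<and>
     (\<forall>C\<in>\<Sigma>. \<exists>\<sigma>\<in>\<Sigma>. C \<subseteq> \<sigma> \<and> lattice_basis \<sigma>) \<and>
     (\<forall>C\<in>\<Sigma>. \<forall>C'\<in>\<Sigma>. pos_hull C \<inter> pos_hull C' = pos_hull (C \<inter> C')) \<and>
     (\<Union>C\<in>\<Sigma>. pos_hull C) = UNIV"
  using fan unfolding smooth_complete_fan_def by assumption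

lemma finR: "finite R" using fanD by (elim conjE)
lemma intR: "\<rho> \<in> R \<Longrightarrow> int_vec \<rho>" using fanD by (elim conjE) blast
lemma SigmaR: "C \<in> \<Sigma> \<Longrightarrow> C \<subseteq> R" using fanD by (elim conjE) blast
lemma empty_in: "{} \<in> \<Sigma>" using fanD by (elim conjE)
lemma single_in: "\<rho> \<in> R \<Longrightarrow> {\<rho>} \<in> \<Sigma>" using fanD by (elim conjE) blast
lemma sub_in: "C \<in> \<Sigma> \<Longrightarrow> C' \<subseteq> C \<Longrightarrow> C' \<in> \<Sigma>" using fanD by (elim conjE) blast
lemma ext_basis: "C \<in> \<Sigma> \<Longrightarrow> \<exists>\<sigma>\<in>\<Sigma>. C \<subseteq> \<sigma> \<and> lattice_basis \<sigma>"
proof -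
  assume a: "C \<in> \<Sigma>"
  have h: "\<forall>C\<in>\<Sigma>. \<exists>\<sigma>\<in>\<Sigma>. C \<subseteq> \<sigma> \<and> lattice_basis \<sigma>" using fanD by (elim conjE)
  show ?thesis using h a by (rule bspec)
qed
lemma inter_hull: "C \<in> \<Sigma> \<Longrightarrow> C' \<in> \<Sigma> \<Longrightarrow> pos_hull C \<inter> pos_hull C' = pos_hull (C \<inter> C')"
proof -
  assume a: "C \<in> \<Sigma>" "C' \<in> \<Sigma>"
  have h: "\<forall>C\<in>\<Sigma>. \<forall>C'\<in>\<Sigma>. pos_hull C \<inter> pos_hull C' = pos_hull (C \<inter> C')" using fanD by (elim conjE)
  show ?thesis using h a by blast
qed
lemma cover: "\<exists>C\<in>\<Sigma>. x \<in> pos_hull C"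
proof -
  have eq: "(\<Union>C\<in>\<Sigma>. pos_hull C) = UNIV" using fanD by (elim conjE)
  have "x \<in> (\<Union>C\<in>\<Sigma>. pos_hull C)" unfolding eq by (rule UNIV_I)
  then show ?thesis by (rule UN_E) (rule bexI)
qed
lemma finSigma: "finite \<Sigma>"
proof -
  have "\<Sigma> \<subseteq> Pow R" using fanD by (elim conjE)
  then show ?thesis using finR by (meson finite_Pow_iff finite_subset)
qed
lemma cone_fin: "C \<in> \<Sigma> \<Longrightarrow> finite C" using SigmaR finR finite_subset by blast
lemma cone_indep: "C \<in> \<Sigma> \<Longrightarrow> independent C"
proof -
  assume "C \<in> \<Sigma>"
  then obtain \<sigma> where "C \<subseteq> \<sigma>" "lattice_basis \<sigma>" using ext_basis by blast
  then show ?thesis unfolding lattice_basis_def using independent_mono by blast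
qed

lemma pos_hullI: "\<forall>v\<in>S. 0 \<le> c v \<Longrightarrow> (\<Sum>v\<in>S. c v *\<^sub>R v) \<in> pos_hull S"
  unfolding pos_hull_def by blast

lemma support:
  assumes "E1 \<in> \<Sigma>" "E2 \<in> \<Sigma>" "\<forall>v\<in>E1. a v > 0" "(\<Sum>v\<in>E1. a v *\<^sub>R v) \<in> pos_hull E2"
  shows "E1 \<subseteq> E2"
proof
  fix v assume v: "v \<in> E1"
  let ?p = "\<Sum>v\<in>E1. a v *\<^sub>R v"
  have "?p \<in> pos_hull E1" using assms(3) by (intro pos_hullI) (simp add: less_imp_le)
  then have "?p \<in> pos_hull (E1 \<inter> E2)" using inter_hull assms by blast
  then obtain g where g: "?p = (\<Sum>v\<in>E1\<inter>E2. g v *\<^sub>R v)" unfolding pos_hull_def by auto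
  have fin: "finite E1" and ind: "independent E1" using assms(1) cone_fin cone_indep by auto
  have e: "?p = (\<Sum>v\<in>E1. (if v \<in> E1\<inter>E2 then g v else 0) *\<^sub>R v)"
    using extend_sum[OF fin, of "E1\<inter>E2" g "\<lambda>v. v"] g by auto
  have "a v = (if v \<in> E1\<inter>E2 then g v else 0)" using uniq_coeffs[OF fin ind e v] .
  then show "v \<in> E2" using assms(3) v by (auto split: if_splits)
qed

lemma rel_support:
  assumes "E1 \<in> \<Sigma>" "E2 \<in> \<Sigma>" "\<tau> \<subseteq> E1" "\<tau> \<subseteq> E2"
    "\<forall>v\<in>E1-\<tau>. a v > 0" "\<forall>v\<in>E2-\<tau>. b v \<ge> 0"
    "(\<Sum>v\<in>E1. a v *\<^sub>R v) = (\<Sum>v\<in>E2. b v *\<^sub>R v)"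
  shows "E1 \<subseteq> E2"
proof -
  have fin1: "finite E1" and fin2: "finite E2" using assms cone_fin by auto
  then have fint: "finite \<tau>" using assms(3) finite_subset by blast
  define N where "N = 1 + (\<Sum>v\<in>\<tau>. \<bar>a v\<bar> + \<bar>b v\<bar>)"
  have Nab: "\<bar>a v\<bar> + \<bar>b v\<bar> < N" if "v \<in> \<tau>" for v
  proof -
    have "\<bar>a v\<bar> + \<bar>b v\<bar> \<le> (\<Sum>v\<in>\<tau>. \<bar>a v\<bar> + \<bar>b v\<bar>)"
      using fint that by (intro member_le_sum) auto
    then show ?thesis unfolding N_def by simp
  qed
  define a' where "a' v = a v + (if v \<in> \<tau> then N else 0)" for v
  define b' where "b' v = b v + (if v \<in> \<tau> then N else 0)" for v
  have ea: "(\<Sum>v\<in>E1. a' v *\<^sub>R v) = (\<Sum>v\<in>E1. a v *\<^sub>R v) + (\<Sum>v\<in>\<tau>. N *\<^sub>R v)"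
    
  proof -
    have "(\<Sum>v\<in>E1. a' v *\<^sub>R v) = (\<Sum>v\<in>E1. a v *\<^sub>R v + (if v \<in> \<tau> then N else 0) *\<^sub>R v)"
      unfolding a'_def by (rule sum.cong) (auto simp: scaleR_add_left)
    also have "\<dots> = (\<Sum>v\<in>E1. a v *\<^sub>R v) + (\<Sum>v\<in>E1. (if v \<in> \<tau> then N else 0) *\<^sub>R v)"
      by (rule sum.distrib)
    also have "(\<Sum>v\<in>E1. (if v \<in> \<tau> then N else 0) *\<^sub>R v) = (\<Sum>v\<in>\<tau>. N *\<^sub>R v)"
      using extend_sum[OF fin1 assms(3), of "\<lambda>_. N" "\<lambda>v. v"] by simp
    finally show ?thesis .
  qed
  have eb: "(\<Sum>v\<in>E2. b' v *\<^sub>R v) = (\<Sum>v\<in>E2. b v *\<^sub>R v) + (\<Sum>v\<in>\<tau>. N *\<^sub>R v)"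
    
  proof -
    have "(\<Sum>v\<in>E2. b' v *\<^sub>R v) = (\<Sum>v\<in>E2. b v *\<^sub>R v + (if v \<in> \<tau> then N else 0) *\<^sub>R v)"
      unfolding b'_def by (rule sum.cong) (auto simp: scaleR_add_left)
    also have "\<dots> = (\<Sum>v\<in>E2. b v *\<^sub>R v) + (\<Sum>v\<in>E2. (if v \<in> \<tau> then N else 0) *\<^sub>R v)"
      by (rule sum.distrib)
    also have "(\<Sum>v\<in>E2. (if v \<in> \<tau> then N else 0) *\<^sub>R v) = (\<Sum>v\<in>\<tau>. N *\<^sub>R v)"
      using extend_sum[OF fin2 assms(4), of "\<lambda>_. N" "\<lambda>v. v"] by simp
    finally show ?thesis .
  qed
  have pa: "\<forall>v\<in>E1. a' v > 0"
  proof
    fix v assume "v \<in> E1"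
    show "a' v > 0"
    proof (cases "v \<in> \<tau>")
      case True then show ?thesis using Nab[OF True] unfolding a'_def by auto
    next
      case False then show ?thesis using assms(5) \<open>v \<in> E1\<close> unfolding a'_def by auto
    qed
  qed
  have pb: "\<forall>v\<in>E2. b' v \<ge> 0"
  proof
    fix v assume "v \<in> E2"
    show "b' v \<ge> 0"
    proof (cases "v \<in> \<tau>")
      case True then show ?thesis using Nab[OF True] unfolding b'_def by auto
    next
      case False then show ?thesis using assms(6) \<open>v \<in> E2\<close> unfolding b'_def by auto
    qed
  qed
  have "(\<Sum>v\<in>E1. a' v *\<^sub>R v) \<in> pos_hull E2"
    using ea eb assms(7) pos_hullI[OF pb] by simp
  then show ?thesis using support[OF assms(1,2) pa] by blast
qed

end

context
  fixes R :: "(real^'n) set" and \<Sigma> :: "(real^'n) set set"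
  assumes fan: "smooth_complete_fan R \<Sigma>"
begin

lemma rel_cover:
  assumes "\<tau> \<in> \<Sigma>"
  shows "\<exists>D d. D \<in> \<Sigma> \<and> \<tau> \<subseteq> D \<and> p = (\<Sum>v\<in>D. d v *\<^sub>R v) \<and> (\<forall>v\<in>D-\<tau>. d v > 0)"
proof -
  define u where "u = (\<Sum>t\<in>\<tau>. t)"
  define Cf where "Cf N = (SOME C. C \<in> \<Sigma> \<and> p + real N *\<^sub>R u \<in> pos_hull C)" for N :: nat
  have Cf: "Cf N \<in> \<Sigma> \<and> p + real N *\<^sub>R u \<in> pos_hull (Cf N)" for N
  proof -
    have "\<exists>C. C \<in> \<Sigma> \<and> p + real N *\<^sub>R u \<in> pos_hull C" using cover[OF fan] by blast
    from someI_ex[OF this] show ?thesis unfolding Cf_def .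
  qed
  have "range Cf \<subseteq> \<Sigma>" using Cf by blast
  then have "finite (range Cf)" using finSigma[OF fan] finite_subset by blast
  then obtain N0 where "infinite {N\<in>UNIV. Cf N = Cf N0}"
    using pigeonhole_infinite[of "UNIV::nat set" Cf] by auto
  define C where "C = Cf N0"
  define I where "I = {N. Cf N = C}"
  have infI: "infinite I" using \<open>infinite _\<close> unfolding I_def C_def by simp
  then have unb: "\<forall>m. \<exists>n>m. n \<in> I" using infinite_nat_iff_unbounded by blast
  have CS: "C \<in> \<Sigma>" using Cf unfolding C_def by blast
  have inI: "p + real N *\<^sub>R u \<in> pos_hull C" if "N \<in> I" for N
    using Cf[of N] that unfolding I_def by simp
  obtain \<sigma> where \<sigma>: "\<sigma> \<in> \<Sigma>" "C \<subseteq> \<sigma>" "lattice_basis \<sigma>" using ext_basis[OF fan CS] by blast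
  have fin: "finite \<sigma>" and ind: "independent \<sigma>" using \<sigma>(3) unfolding lattice_basis_def by auto
  obtain \<alpha> where \<alpha>: "u = (\<Sum>v\<in>\<sigma>. \<alpha> v *\<^sub>R v)" using basis_coords[OF \<sigma>(3)] by blast
  obtain \<beta> where \<beta>: "p = (\<Sum>v\<in>\<sigma>. \<beta> v *\<^sub>R v)" using basis_coords[OF \<sigma>(3)] by blast
  have key: "(\<forall>v\<in>\<sigma>-C. \<beta> v + real N * \<alpha> v = 0) \<and> (\<forall>v\<in>C. \<beta> v + real N * \<alpha> v \<ge> 0)"
    if NI: "N \<in> I" for N
  proof -
    obtain g where g: "p + real N *\<^sub>R u = (\<Sum>v\<in>C. g v *\<^sub>R v)" "\<forall>v\<in>C. g v \<ge> 0"
      using inI[OF NI] unfolding pos_hull_def by auto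
    have e1: "p + real N *\<^sub>R u = (\<Sum>v\<in>\<sigma>. (\<beta> v + real N * \<alpha> v) *\<^sub>R v)"
      unfolding \<alpha> \<beta> by (simp add: scaleR_add_left sum.distrib scaleR_sum_right)
    have e2: "p + real N *\<^sub>R u = (\<Sum>v\<in>\<sigma>. (if v \<in> C then g v else 0) *\<^sub>R v)"
      using extend_sum[OF fin \<sigma>(2), of g "\<lambda>v. v"] g(1) by simp
    have "\<beta> v + real N * \<alpha> v = (if v \<in> C then g v else 0)" if "v \<in> \<sigma>" for v
      using uniq_coeffs[OF fin ind e1[symmetric, THEN trans, OF e2] that] .
    then show ?thesis using g(2) \<sigma>(2) by auto
  qed
  have \<alpha>0: "\<alpha> v = 0" if v: "v \<in> \<sigma> - C" for v
  proof -
    obtain N1 where N1: "N1 > 0" "N1 \<in> I" using unb by blast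
    obtain N2 where N2: "N2 > N1" "N2 \<in> I" using unb by blast
    have "\<beta> v + real N1 * \<alpha> v = 0" "\<beta> v + real N2 * \<alpha> v = 0"
      using key[OF N1(2)] key[OF N2(2)] v by auto
    then have "(real N2 - real N1) * \<alpha> v = 0"
      by (metis add_diff_cancel_left' diff_self left_diff_distrib)
    then show ?thesis using N2(1) by simp
  qed
  have \<alpha>pos: "\<alpha> v \<ge> 0" if v: "v \<in> C" for v
  proof (rule ccontr)
    assume "\<not> \<alpha> v \<ge> 0"
    then have neg: "- \<alpha> v > 0" by simp
    obtain n where n: "n > nat \<lceil>\<bar>\<beta> v\<bar> / (- \<alpha> v)\<rceil>" "n \<in> I" using unb by blast
    have nn: "\<bar>\<beta> v\<bar> / (- \<alpha> v) < real n" using n(1) by linarith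
    have "real n * (- \<alpha> v) > \<bar>\<beta> v\<bar>" using pos_divide_less_eq[OF neg, of "\<bar>\<beta> v\<bar>" "real n"] nn by blast
    then have "\<beta> v + real n * \<alpha> v < 0" by (simp add: algebra_simps)
    then show False using key[OF n(2)] v by auto
  qed
  have uC: "u = (\<Sum>v\<in>C. \<alpha> v *\<^sub>R v)"
    unfolding \<alpha> using \<alpha>0 by (intro sum.mono_neutral_right[OF fin \<sigma>(2)]) auto
  have "u \<in> pos_hull C" unfolding uC using \<alpha>pos by (intro pos_hullI[OF fan]) auto
  moreover have "u = (\<Sum>v\<in>\<tau>. (\<lambda>_. 1::real) v *\<^sub>R v)" unfolding u_def by simp
  ultimately have tC: "\<tau> \<subseteq> C" using support[OF fan assms CS, of "\<lambda>_. 1"] by simp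
  have eu: "u = (\<Sum>v\<in>\<sigma>. (if v \<in> \<tau> then 1 else 0) *\<^sub>R v)"
    using extend_sum[OF fin, of \<tau> "\<lambda>_. 1" "\<lambda>v. v"] tC \<sigma>(2) unfolding u_def by auto
  have \<alpha>\<tau>: "\<alpha> v = (if v \<in> \<tau> then 1 else 0)" if "v \<in> \<sigma>" for v
    using uniq_coeffs[OF fin ind \<alpha>[symmetric, THEN trans, OF eu] that] .
  obtain N1 where N1: "N1 \<in> I" using unb by blast
  have \<beta>0: "\<beta> v = 0" if "v \<in> \<sigma> - C" for v
  proof -
    have "\<beta> v + real N1 * \<alpha> v = 0" using key[OF N1] that by blast
    then show ?thesis using \<alpha>0[OF that] by simp
  qed
  have \<beta>pos: "\<beta> v \<ge> 0" if "v \<in> C - \<tau>" for v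
  proof -
    have "\<beta> v + real N1 * \<alpha> v \<ge> 0" using key[OF N1] that by blast
    moreover have "\<alpha> v = 0" using \<alpha>\<tau>[of v] that \<sigma>(2) by auto
    ultimately show ?thesis by simp
  qed
  define D where "D = {v\<in>C. v \<in> \<tau> \<or> \<beta> v > 0}"
  have DC: "D \<subseteq> C" unfolding D_def by auto
  have pC: "p = (\<Sum>v\<in>C. \<beta> v *\<^sub>R v)"
    unfolding \<beta> using \<beta>0 by (intro sum.mono_neutral_right[OF fin \<sigma>(2)]) auto
  have finC: "finite C" using cone_fin[OF fan CS] .
  have pD: "p = (\<Sum>v\<in>D. \<beta> v *\<^sub>R v)"
    unfolding pC using \<beta>pos unfolding D_def
    by (intro sum.mono_neutral_right[OF finC]) force+
  have "D \<in> \<Sigma>" using sub_in[OF fan CS DC] .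
  moreover have "\<tau> \<subseteq> D" using tC unfolding D_def by auto
  moreover have "\<forall>v\<in>D-\<tau>. \<beta> v > 0" unfolding D_def by auto
  ultimately show ?thesis using pD by blast
qed

end

lemma int_ge1: "(x::real) \<in> \<int> \<Longrightarrow> x > 0 \<Longrightarrow> x \<ge> 1"
  by (elim Ints_cases) auto

lemma int_eq1: "(x::real) \<in> \<int> \<Longrightarrow> x > 0 \<Longrightarrow> x < 2 \<Longrightarrow> x = 1"
  by (elim Ints_cases) auto

lemma inner_lin: "m \<bullet> (\<Sum>v\<in>S. f v *\<^sub>R v) = (\<Sum>v\<in>S. f v * (m \<bullet> v))"
  by (simp add: inner_sum_right)

context
  fixes R :: "(real^'n) set" and \<Sigma> :: "(real^'n) set set"
  assumes fan: "smooth_complete_fan R \<Sigma>"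
begin

lemma fano_fun:
  assumes allf: "\<forall>\<tau>\<in>\<Sigma>. orbit_closure_fano R \<Sigma> \<tau>" and tS: "\<tau> \<in> \<Sigma>" and sS: "\<sigma> \<in> \<Sigma>"
    and lb: "lattice_basis \<sigma>" and ts: "\<tau> \<subseteq> \<sigma>"
  shows "\<exists>m. (\<forall>\<rho>\<in>\<tau>. m \<bullet> \<rho> = 0) \<and> (\<forall>\<rho>\<in>\<sigma>-\<tau>. m \<bullet> \<rho> = 1) \<and>
    (\<forall>x\<in>R. x \<notin> \<tau> \<and> insert x \<tau> \<in> \<Sigma> \<longrightarrow> m \<bullet> x \<le> 1) \<and>
    (\<forall>x\<in>R. x \<notin> \<sigma> \<and> insert x \<tau> \<in> \<Sigma> \<longrightarrow> m \<bullet> x < 1)"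
proof -
  have mc: "max_cone \<Sigma> \<sigma>" using sS lb unfolding max_cone_def lattice_basis_def by auto
  have "orbit_closure_fano R \<Sigma> \<tau>" using allf tS by blast
  then have "\<exists>m::real^'n. (\<forall>\<rho>\<in>\<tau>. m \<bullet> \<rho> = 0) \<and> (\<forall>\<rho>\<in>\<sigma> - \<tau>. m \<bullet> \<rho> = 1) \<and>
           (\<forall>\<rho>\<in>R. \<rho> \<notin> \<sigma> \<and> insert \<rho> \<tau> \<in> \<Sigma> \<longrightarrow> m \<bullet> \<rho> < 1)"
    using mc ts unfolding orbit_closure_fano_def by blast
  then obtain m :: "real^'n" where m: "\<forall>\<rho>\<in>\<tau>. m \<bullet> \<rho> = 0" "\<forall>\<rho>\<in>\<sigma> - \<tau>. m \<bullet> \<rho> = 1"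
      "\<forall>\<rho>\<in>R. \<rho> \<notin> \<sigma> \<and> insert \<rho> \<tau> \<in> \<Sigma> \<longrightarrow> m \<bullet> \<rho> < 1" by blast
  have "\<forall>x\<in>R. x \<notin> \<tau> \<and> insert x \<tau> \<in> \<Sigma> \<longrightarrow> m \<bullet> x \<le> 1"
  proof (intro ballI impI)
    fix x assume x: "x \<in> R" "x \<notin> \<tau> \<and> insert x \<tau> \<in> \<Sigma>"
    show "m \<bullet> x \<le> 1"
    proof (cases "x \<in> \<sigma>")
      case True then show ?thesis using m(2) x by simp
    next
      case False then show ?thesis using m(3) x by (simp add: less_imp_le)
    qed
  qed
  then show ?thesis using m by blast
qed

lemma rel_disjoint:
  assumes tS: "\<tau> \<in> \<Sigma>" and PR: "P \<subseteq> R" and finP: "finite P" and dis: "P \<inter> \<tau> = {}"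
    and nP: "P \<union> \<tau> \<notin> \<Sigma>" and sub: "\<forall>Q. Q \<subset> P \<longrightarrow> Q \<union> \<tau> \<in> \<Sigma>"
    and DS: "D \<in> \<Sigma>" and tD: "\<tau> \<subseteq> D" and pD: "(\<Sum>x\<in>P. x) = (\<Sum>v\<in>D. d v *\<^sub>R v)"
    and dpos: "\<forall>v\<in>D-\<tau>. d v > 0"
  shows "P \<inter> D = {}"
proof (rule ccontr)
  assume "P \<inter> D \<noteq> {}"
  then obtain x1 where x1: "x1 \<in> P" "x1 \<in> D" by blast
  have x1t: "x1 \<notin> \<tau>" using dis x1 by blast
  obtain \<sigma> where \<sigma>: "\<sigma> \<in> \<Sigma>" "D \<subseteq> \<sigma>" "lattice_basis \<sigma>" using ext_basis[OF fan DS] by blast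
  have "int_vec (\<Sum>x\<in>P. x)" using int_vec_sum intR[OF fan] PR by blast
  then have "d x1 \<in> \<int>" using basis_int_coords[OF \<sigma>(3) _ \<sigma>(2) pD x1(2)] by blast
  moreover have "d x1 > 0" using dpos x1 x1t by blast
  ultimately have d1: "d x1 \<ge> 1" by (rule int_ge1)
  define E1 where "E1 = (P - {x1}) \<union> \<tau>"
  have "P - {x1} \<subset> P" using x1 by blast
  then have E1S: "E1 \<in> \<Sigma>" using sub unfolding E1_def by blast
  define a where "a v = (if v \<in> \<tau> then 0 else 1::real)" for v
  have finD: "finite D" using cone_fin[OF fan DS] .
  have fint: "finite \<tau>" using cone_fin[OF fan tS] .
  have eA: "(\<Sum>v\<in>E1. a v *\<^sub>R v) = (\<Sum>x\<in>P. x) - x1"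
  proof -
    have "(\<Sum>v\<in>E1. a v *\<^sub>R v) = (\<Sum>v\<in>P-{x1}. a v *\<^sub>R v) + (\<Sum>v\<in>\<tau>. a v *\<^sub>R v)"
      unfolding E1_def by (rule sum.union_disjoint) (use finP fint dis in auto)
    also have "(\<Sum>v\<in>\<tau>. a v *\<^sub>R v) = 0" unfolding a_def by simp
    also have "(\<Sum>v\<in>P-{x1}. a v *\<^sub>R v) = (\<Sum>v\<in>P-{x1}. v)"
      using dis unfolding a_def by (intro sum.cong) auto
    also have "(\<Sum>v\<in>P-{x1}. v) = (\<Sum>x\<in>P. x) - x1"
      using sum.remove[OF finP x1(1), of "\<lambda>v. v"] by (simp add: algebra_simps)
    finally show ?thesis by simp
  qed
  define b where "b v = d v - (if v = x1 then 1 else 0)" for v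
  have eB: "(\<Sum>v\<in>D. b v *\<^sub>R v) = (\<Sum>x\<in>P. x) - x1"
  proof -
    have "(\<Sum>v\<in>D. b v *\<^sub>R v) = (\<Sum>v\<in>D. d v *\<^sub>R v) - (\<Sum>v\<in>D. (if v \<in> {x1} then 1 else 0) *\<^sub>R v)"
      unfolding b_def by (simp add: scaleR_diff_left sum_subtractf)
    also have "(\<Sum>v\<in>D. (if v \<in> {x1} then 1 else 0) *\<^sub>R v) = x1"
      using extend_sum[OF finD, of "{x1}" "\<lambda>_. 1" "\<lambda>v. v"] x1(2) by simp
    finally show ?thesis using pD by simp
  qed
  have bpos: "\<forall>v\<in>D-\<tau>. b v \<ge> 0"
  proof
    fix v assume v: "v \<in> D - \<tau>"
    show "b v \<ge> 0"
    proof (cases "v = x1")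
      case True then show ?thesis using d1 unfolding b_def by simp
    next
      case False then show ?thesis using dpos v unfolding b_def by (simp add: less_imp_le)
    qed
  qed
  have apos: "\<forall>v\<in>E1-\<tau>. a v > 0" unfolding a_def by simp
  have "\<tau> \<subseteq> E1" unfolding E1_def by blast
  have "E1 \<subseteq> D"
    using rel_support[OF fan E1S DS \<open>\<tau> \<subseteq> E1\<close> tD apos bpos] eA eB by simp
  then have "P \<union> \<tau> \<subseteq> D" using x1 tD unfolding E1_def by blast
  then have "P \<union> \<tau> \<in> \<Sigma>" using sub_in[OF fan DS] by blast
  then show False using nP by blast
qed

end

context
  fixes R :: "(real^'n) set" and \<Sigma> :: "(real^'n) set set"
  assumes fan: "smooth_complete_fan R \<Sigma>"
begin

lemma relC:
  assumes allf: "\<forall>\<tau>\<in>\<Sigma>. orbit_closure_fano R \<Sigma> \<tau>"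
  shows "card P = k \<Longrightarrow> 2 \<le> k \<Longrightarrow> \<tau> \<in> \<Sigma> \<Longrightarrow> P \<subseteq> R \<Longrightarrow> P \<inter> \<tau> = {} \<Longrightarrow> P \<union> \<tau> \<notin> \<Sigma> \<Longrightarrow>
     (\<forall>Q. Q \<subset> P \<longrightarrow> Q \<union> \<tau> \<in> \<Sigma>) \<Longrightarrow>
     \<exists>\<epsilon> y lam. (\<epsilon> = 0 \<or> (\<epsilon> = 1 \<and> insert y \<tau> \<in> \<Sigma> \<and> y \<notin> \<tau>)) \<and>
        (\<Sum>x\<in>P. x) = \<epsilon> *\<^sub>R y + (\<Sum>t\<in>\<tau>. lam t *\<^sub>R t)"
proof (induction k arbitrary: P \<tau> rule: less_induct)
  case (less k P \<tau>)
  note hyp = less.prems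
  have finP: "finite P" using hyp(1,2) card.infinite by fastforce
  have fint: "finite \<tau>" using cone_fin[OF fan hyp(3)] .
  let ?p = "\<Sum>x\<in>P. x"
  obtain D d where D: "D \<in> \<Sigma>" "\<tau> \<subseteq> D" "?p = (\<Sum>v\<in>D. d v *\<^sub>R v)" "\<forall>v\<in>D-\<tau>. d v > 0"
    using rel_cover[OF fan hyp(3)] by blast
  obtain \<sigma> where \<sigma>: "\<sigma> \<in> \<Sigma>" "D \<subseteq> \<sigma>" "lattice_basis \<sigma>" using ext_basis[OF fan D(1)] by blast
  have t\<sigma>: "\<tau> \<subseteq> \<sigma>" using D(2) \<sigma>(2) by blast
  obtain m where m: "\<forall>\<rho>\<in>\<tau>. m \<bullet> \<rho> = 0" "\<forall>\<rho>\<in>\<sigma>-\<tau>. m \<bullet> \<rho> = 1"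
    "\<forall>x\<in>R. x \<notin> \<tau> \<and> insert x \<tau> \<in> \<Sigma> \<longrightarrow> m \<bullet> x \<le> 1"
    "\<forall>x\<in>R. x \<notin> \<sigma> \<and> insert x \<tau> \<in> \<Sigma> \<longrightarrow> m \<bullet> x < 1"
    using fano_fun[OF fan allf hyp(3) \<sigma>(1) \<sigma>(3) t\<sigma>] by blast
  have finD: "finite D" using cone_fin[OF fan D(1)] .
  define A where "A = (\<Sum>v\<in>D-\<tau>. d v)"
  have mp: "m \<bullet> ?p = A"
  proof -
    have "m \<bullet> ?p = (\<Sum>v\<in>D. d v * (m \<bullet> v))" unfolding D(3) by (rule inner_lin)
    also have "\<dots> = (\<Sum>v\<in>D-\<tau>. d v * (m \<bullet> v)) + (\<Sum>v\<in>\<tau>. d v * (m \<bullet> v))"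
      using sum.subset_diff[OF D(2) finD] by simp
    also have "(\<Sum>v\<in>\<tau>. d v * (m \<bullet> v)) = 0" using m(1) by simp
    also have "(\<Sum>v\<in>D-\<tau>. d v * (m \<bullet> v)) = A" unfolding A_def using m(2) \<sigma>(2) by (intro sum.cong) auto
    finally show ?thesis by simp
  qed
  have mp2: "m \<bullet> ?p = (\<Sum>x\<in>P. m \<bullet> x)" by (simp add: inner_sum_right)
  have "int_vec ?p" using int_vec_sum intR[OF fan] hyp(4) by blast
  then have dint: "\<forall>v\<in>D. d v \<in> \<int>" using basis_int_coords[OF \<sigma>(3) _ \<sigma>(2) D(3)] by blast
  have xstar: "x \<notin> \<tau> \<and> insert x \<tau> \<in> \<Sigma>" if x: "x \<in> P" for x
  proof -
    have "P \<noteq> {x}" using hyp(1,2) by auto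
    then have "{x} \<subset> P" using x by blast
    then have "{x} \<union> \<tau> \<in> \<Sigma>" using hyp(7) by blast
    then show ?thesis using hyp(5) x by auto
  qed
  have mx: "m \<bullet> x \<le> 1" if "x \<in> P" for x using m(3) xstar[OF that] hyp(4) that by blast
  have case0: "\<exists>\<epsilon> y lam. (\<epsilon> = 0 \<or> (\<epsilon> = 1 \<and> insert y \<tau> \<in> \<Sigma> \<and> y \<notin> \<tau>)) \<and>
        ?p = \<epsilon> *\<^sub>R y + (\<Sum>t\<in>\<tau>. lam t *\<^sub>R t)" if "D - \<tau> = {}"
  proof -
    have "D = \<tau>" using that D(2) by blast
    then show ?thesis using D(3) by (intro exI[of _ 0] exI[of _ undefined] exI[of _ d]) simp
  qed
  have case1: "\<exists>\<epsilon> y lam. (\<epsilon> = 0 \<or> (\<epsilon> = 1 \<and> insert y \<tau> \<in> \<Sigma> \<and> y \<notin> \<tau>)) \<and>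
        ?p = \<epsilon> *\<^sub>R y + (\<Sum>t\<in>\<tau>. lam t *\<^sub>R t)" if y: "D - \<tau> = {y}" "d y = 1" for y
  proof -
    have Dy: "D = insert y \<tau>" and yt: "y \<notin> \<tau>" using y(1) D(2) by blast+
    have "?p = d y *\<^sub>R y + (\<Sum>t\<in>\<tau>. d t *\<^sub>R t)" unfolding D(3) Dy using fint yt by simp
    then have "?p = 1 *\<^sub>R y + (\<Sum>t\<in>\<tau>. d t *\<^sub>R t)" using y(2) by simp
    moreover have "insert y \<tau> \<in> \<Sigma>" using D(1) Dy by simp
    ultimately show ?thesis using yt by (intro exI[of _ 1] exI[of _ y] exI[of _ d]) simp
  qed
  show ?case
  proof (cases "D - \<tau> = {}")
    case True then show ?thesis using case0 by blast
  next
    case nonemp: False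
    then obtain y0 where y0: "y0 \<in> D - \<tau>" by blast
    have dge1: "d v \<ge> 1" if "v \<in> D - \<tau>" for v using dint D(4) int_ge1 that by blast
    have dnn: "\<forall>v\<in>D-\<tau>. d v \<ge> 0" using D(4) by (simp add: less_imp_le)
    have finDt: "finite (D - \<tau>)" using finD by simp
    have Ay0: "d y0 \<le> A" unfolding A_def using dnn by (intro member_le_sum[OF y0 _ finDt]) auto
    show ?thesis
    proof (cases "k = 2")
      case True
      then have "card P = 2" using hyp(1) by simp
      then obtain x1 x2 where P: "P = {x1, x2}" "x1 \<noteq> x2" by (auto simp: card_2_iff)
      have n12: "\<not> (x1 \<in> \<sigma> \<and> x2 \<in> \<sigma>)"
      proof
        assume "x1 \<in> \<sigma> \<and> x2 \<in> \<sigma>"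
        then have "P \<union> \<tau> \<subseteq> \<sigma>" using P t\<sigma> by blast
        then show False using sub_in[OF fan \<sigma>(1)] hyp(6) by blast
      qed
      have mxx: "m \<bullet> x \<le> 1 \<and> (x \<notin> \<sigma> \<longrightarrow> m \<bullet> x < 1)" if "x \<in> P" for x
        using mx[OF that] m(4) xstar[OF that] hyp(4) that by blast
      have "m \<bullet> x1 + m \<bullet> x2 < 2"
      proof -
        have a1: "m \<bullet> x1 \<le> 1" "x1 \<notin> \<sigma> \<longrightarrow> m \<bullet> x1 < 1" using mxx[of x1] P by auto
        have a2: "m \<bullet> x2 \<le> 1" "x2 \<notin> \<sigma> \<longrightarrow> m \<bullet> x2 < 1" using mxx[of x2] P by auto
        show ?thesis using a1 a2 n12 by linarith
      qed
      then have A2: "A < 2" using mp mp2 P by (simp add: sum.insert)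
      have single: "D - \<tau> = {y0}"
      proof (rule ccontr)
        assume "D - \<tau> \<noteq> {y0}"
        then obtain z where z: "z \<in> D - \<tau>" "z \<noteq> y0" using y0 by blast
        have "d y0 + d z = (\<Sum>v\<in>{y0,z}. d v)" using z by simp
        also have "\<dots> \<le> A" unfolding A_def using y0 z dnn finDt by (intro sum_mono2) auto
        finally show False using dge1[OF y0] dge1[OF z(1)] A2 by linarith
      qed
      have "d y0 \<in> \<int>" "d y0 > 0" using dint y0 D(4) by auto
      then have "d y0 = 1" using Ay0 A2 by (intro int_eq1) auto
      then show ?thesis using case1 single by blast
    next
      case False
      then have k3: "3 \<le> k" using hyp(2) by simp
      have A1: "A \<ge> 1" using Ay0 dge1[OF y0] by linarith
      have IH: "\<exists>\<epsilon> y lam. (\<epsilon> = 0 \<or> (\<epsilon> = 1 \<and> insert y (insert x \<tau>) \<in> \<Sigma> \<and> y \<notin> insert x \<tau>)) \<and>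
          (\<Sum>z\<in>P-{x}. z) = \<epsilon> *\<^sub>R y + (\<Sum>t\<in>insert x \<tau>. lam t *\<^sub>R t)" if x: "x \<in> P" for x
      proof -
        have p1: "k - 1 < k" using k3 by simp
        have p2: "card (P - {x}) = k - 1" using hyp(1) x finP by simp
        have p3: "2 \<le> k - 1" using k3 by simp
        have p4: "insert x \<tau> \<in> \<Sigma>" using xstar[OF x] by blast
        have p5: "P - {x} \<subseteq> R" using hyp(4) by blast
        have p6: "(P - {x}) \<inter> insert x \<tau> = {}" using hyp(5) by blast
        have eq: "(P - {x}) \<union> insert x \<tau> = P \<union> \<tau>" using x by blast
        have p7: "(P - {x}) \<union> insert x \<tau> \<notin> \<Sigma>" using hyp(6) eq by simp
        have p8: "\<forall>Q. Q \<subset> P - {x} \<longrightarrow> Q \<union> insert x \<tau> \<in> \<Sigma>"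
        proof (intro allI impI)
          fix Q assume "Q \<subset> P - {x}"
          then have "insert x Q \<subset> P" using x by blast
          then have "insert x Q \<union> \<tau> \<in> \<Sigma>" using hyp(7) by blast
          moreover have "insert x Q \<union> \<tau> = Q \<union> insert x \<tau>" by blast
          ultimately show "Q \<union> insert x \<tau> \<in> \<Sigma>" by simp
        qed
        show ?thesis using less.IH[OF p1 p2 p3 p4 p5 p6 p7 p8] .
      qed
      have decomp: "?p = \<epsilon> *\<^sub>R y + (1 + lam x) *\<^sub>R x + (\<Sum>t\<in>\<tau>. lam t *\<^sub>R t)"
        if x: "x \<in> P" and eq: "(\<Sum>z\<in>P-{x}. z) = \<epsilon> *\<^sub>R y + (\<Sum>t\<in>insert x \<tau>. lam t *\<^sub>R t)"
        for x \<epsilon> y lam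
      proof -
        have e1: "?p = x + (\<Sum>z\<in>P-{x}. z)" using sum.remove[OF finP x] by simp
        have e2: "(\<Sum>t\<in>insert x \<tau>. lam t *\<^sub>R t) = lam x *\<^sub>R x + (\<Sum>t\<in>\<tau>. lam t *\<^sub>R t)"
          using fint xstar[OF x] by simp
        show ?thesis unfolding e1 eq e2 by (simp add: algebra_simps)
      qed
      have mpx: "A = \<epsilon> * (m \<bullet> y) + (1 + lam x) * (m \<bullet> x)"
        if x: "x \<in> P" and eq: "(\<Sum>z\<in>P-{x}. z) = \<epsilon> *\<^sub>R y + (\<Sum>t\<in>insert x \<tau>. lam t *\<^sub>R t)"
        for x \<epsilon> y lam
      proof -
        have "A = m \<bullet> ?p" using mp by simp
        also have "\<dots> = \<epsilon> * (m \<bullet> y) + (1 + lam x) * (m \<bullet> x) + (\<Sum>t\<in>\<tau>. lam t * (m \<bullet> t))"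
          unfolding decomp[OF x eq] by (simp add: inner_add_right inner_lin)
        also have "(\<Sum>t\<in>\<tau>. lam t * (m \<bullet> t)) = 0" using m(1) by simp
        finally show ?thesis by simp
      qed
      have my: "\<epsilon> * (m \<bullet> y) \<le> 1"
        if c: "\<epsilon> = 0 \<or> (\<epsilon> = 1 \<and> insert y (insert x \<tau>) \<in> \<Sigma> \<and> y \<notin> insert x \<tau>)" for \<epsilon> y x
      proof (cases "\<epsilon> = 0")
        case True then show ?thesis by simp
      next
        case False
        then have h: "\<epsilon> = 1" "insert y (insert x \<tau>) \<in> \<Sigma>" "y \<notin> insert x \<tau>" using c by auto
        have "y \<in> R" using SigmaR[OF fan h(2)] by blast
        moreover have "insert y \<tau> \<in> \<Sigma>" using sub_in[OF fan h(2)] by blast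
        ultimately have "m \<bullet> y \<le> 1" using m(3) h(3) by blast
        then show ?thesis using h(1) by simp
      qed
      have "\<exists>x\<in>P. \<exists>\<epsilon> y lam. (\<epsilon> = 0 \<or> (\<epsilon> = 1 \<and> insert y (insert x \<tau>) \<in> \<Sigma> \<and> y \<notin> insert x \<tau>)) \<and>
          (\<Sum>z\<in>P-{x}. z) = \<epsilon> *\<^sub>R y + (\<Sum>t\<in>insert x \<tau>. lam t *\<^sub>R t) \<and> 1 + lam x \<ge> 0"
      proof (rule ccontr)
        assume contra: "\<not> ?thesis"
        have "m \<bullet> x \<le> 0" if x: "x \<in> P" for x
        proof -
          obtain \<epsilon> y lam where c: "\<epsilon> = 0 \<or> (\<epsilon> = 1 \<and> insert y (insert x \<tau>) \<in> \<Sigma> \<and> y \<notin> insert x \<tau>)"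
            and eq: "(\<Sum>z\<in>P-{x}. z) = \<epsilon> *\<^sub>R y + (\<Sum>t\<in>insert x \<tau>. lam t *\<^sub>R t)"
            using IH[OF x] by blast
          have "\<not> (1 + lam x \<ge> 0)" using contra x c eq by blast
          then have neg: "1 + lam x < 0" by simp
          have "A = \<epsilon> * (m \<bullet> y) + (1 + lam x) * (m \<bullet> x)" using mpx[OF x eq] .
          then have "(1 + lam x) * (m \<bullet> x) \<ge> 0" using my[OF c] A1 by linarith
          then show ?thesis using neg by (simp add: zero_le_mult_iff)
        qed
        then have "(\<Sum>x\<in>P. m \<bullet> x) \<le> 0" by (simp add: sum_nonpos)
        then show False using mp mp2 A1 by linarith
      qed
      then obtain x \<epsilon> y lam where x: "x \<in> P"
        and c: "\<epsilon> = 0 \<or> (\<epsilon> = 1 \<and> insert y (insert x \<tau>) \<in> \<Sigma> \<and> y \<notin> insert x \<tau>)"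
        and eq: "(\<Sum>z\<in>P-{x}. z) = \<epsilon> *\<^sub>R y + (\<Sum>t\<in>insert x \<tau>. lam t *\<^sub>R t)"
        and nu: "1 + lam x \<ge> 0" by blast
      have xnD: "x \<notin> D" using rel_disjoint[OF fan hyp(3) hyp(4) finP hyp(5) hyp(6) hyp(7) D] x by blast
      have xt: "x \<notin> \<tau>" "insert x \<tau> \<in> \<Sigma>" using xstar[OF x] by auto
      show ?thesis
      proof (cases "\<epsilon> = 0")
        case True
        define b where "b v = (if v = x then 1 + lam x else lam v)" for v
        have eb: "(\<Sum>v\<in>insert x \<tau>. b v *\<^sub>R v) = (1 + lam x) *\<^sub>R x + (\<Sum>t\<in>\<tau>. lam t *\<^sub>R t)"
        proof -
          have "(\<Sum>v\<in>insert x \<tau>. b v *\<^sub>R v) = b x *\<^sub>R x + (\<Sum>v\<in>\<tau>. b v *\<^sub>R v)" using fint xt by simp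
          also have "(\<Sum>v\<in>\<tau>. b v *\<^sub>R v) = (\<Sum>t\<in>\<tau>. lam t *\<^sub>R t)"
            unfolding b_def using xt by (intro sum.cong) auto
          finally show ?thesis unfolding b_def by simp
        qed
        have e2: "(\<Sum>v\<in>D. d v *\<^sub>R v) = (\<Sum>v\<in>insert x \<tau>. b v *\<^sub>R v)"
          using decomp[OF x eq] True D(3) eb by simp
        have "\<forall>v\<in>insert x \<tau> - \<tau>. b v \<ge> 0" using nu xt unfolding b_def by auto
        then have "D \<subseteq> insert x \<tau>"
          using rel_support[OF fan D(1) xt(2) D(2) _ D(4)] e2 by blast
        then have "D - \<tau> = {}" using xnD by blast
        then show ?thesis using nonemp by blast
      next
        case False
        then have h: "\<epsilon> = 1" "insert y (insert x \<tau>) \<in> \<Sigma>" "y \<notin> insert x \<tau>" using c by auto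
        define E where "E = insert y (insert x \<tau>)"
        have ES: "E \<in> \<Sigma>" using h(2) unfolding E_def .
        define b where "b v = (if v = y then 1 else if v = x then 1 + lam x else lam v)" for v
        have yx: "y \<noteq> x" "y \<notin> \<tau>" using h(3) by auto
        have eE: "(\<Sum>v\<in>E. b v *\<^sub>R v) = y + (1 + lam x) *\<^sub>R x + (\<Sum>t\<in>\<tau>. lam t *\<^sub>R t)"
        proof -
          have "(\<Sum>v\<in>E. b v *\<^sub>R v) = b y *\<^sub>R y + (b x *\<^sub>R x + (\<Sum>v\<in>\<tau>. b v *\<^sub>R v))"
            unfolding E_def using fint xt h(3) by simp
          also have "(\<Sum>v\<in>\<tau>. b v *\<^sub>R v) = (\<Sum>t\<in>\<tau>. lam t *\<^sub>R t)"
            unfolding b_def using xt yx by (intro sum.cong) auto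
          finally show ?thesis unfolding b_def using yx by (simp add: algebra_simps)
        qed
        have e2: "(\<Sum>v\<in>D. d v *\<^sub>R v) = (\<Sum>v\<in>E. b v *\<^sub>R v)" using decomp[OF x eq] h(1) D(3) eE by simp
        have bnn: "\<forall>v\<in>E - \<tau>. b v \<ge> 0" using nu unfolding b_def E_def by auto
        have tE: "\<tau> \<subseteq> E" unfolding E_def by blast
        have "D \<subseteq> E" using rel_support[OF fan D(1) ES D(2) tE D(4) bnn] e2 by blast
        then have Dy: "D - \<tau> = {y}" using xnD nonemp unfolding E_def by blast
        obtain \<sigma>' where \<sigma>': "\<sigma>' \<in> \<Sigma>" "E \<subseteq> \<sigma>'" "lattice_basis \<sigma>'" using ext_basis[OF fan ES] by blast
        have xt\<sigma>: "insert x \<tau> \<subseteq> \<sigma>'" using \<sigma>'(2) unfolding E_def by blast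
        obtain m' where m': "\<forall>\<rho>\<in>insert x \<tau>. m' \<bullet> \<rho> = 0" "\<forall>\<rho>\<in>\<sigma>' - insert x \<tau>. m' \<bullet> \<rho> = 1"
          using fano_fun[OF fan allf xt(2) \<sigma>'(1) \<sigma>'(3) xt\<sigma>] by blast
        have my1: "m' \<bullet> y = 1" using m'(2) \<sigma>'(2) h(3) unfolding E_def by blast
        have "m' \<bullet> ?p = d y"
        proof -
          have "D = insert y \<tau>" using Dy D(2) by blast
          then have "?p = d y *\<^sub>R y + (\<Sum>t\<in>\<tau>. d t *\<^sub>R t)" using D(3) fint yx by simp
          then show ?thesis using my1 m'(1) by (simp add: inner_add_right inner_lin)
        qed
        moreover have "m' \<bullet> ?p = 1"
          using decomp[OF x eq] h(1) my1 m'(1) by (simp add: inner_add_right inner_lin)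
        ultimately have "d y = 1" by simp
        then show ?thesis using case1 Dy by blast
      qed
    qed
  qed
qed

end

lemma min_total:
  fixes S0 :: "(real^'n) set" and \<rho> :: "real^'n"
  assumes fin: "finite S0" and rho0: "\<rho> \<noteq> 0"
    and ex: "\<exists>c. (\<forall>v\<in>S0. 0 \<le> c v) \<and> (\<Sum>v\<in>S0. c v *\<^sub>R v) = \<rho>"
  shows "\<exists>c. (\<forall>v\<in>S0. 0 \<le> c v) \<and> (\<Sum>v\<in>S0. c v *\<^sub>R v) = \<rho> \<and>
           (\<forall>c'. (\<forall>v\<in>S0. 0 \<le> c' v) \<and> (\<Sum>v\<in>S0. c' v *\<^sub>R v) = \<rho> \<longrightarrow> sum c S0 \<le> sum c' S0)"
proof -
  define L where "L = (\<lambda>v. (v, 1::real)) ` S0"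
  define K where "K = conic hull (convex hull L)"
  have finL: "finite L" unfolding L_def using fin by simp
  have Lsnd: "convex hull L \<subseteq> {z. snd z = 1}"
  proof (rule hull_minimal)
    show "L \<subseteq> {z. snd z = 1}" unfolding L_def by auto
    show "convex {z::((real^'n) \<times> real). snd z = 1}"
      unfolding convex_def by (auto simp: algebra_simps)
  qed
  have cK: "closed K" unfolding K_def
  proof (rule closed_conic_hull)
    have "compact (convex hull L)" using finL by (intro compact_convex_hull finite_imp_compact)
    moreover have "(0::((real^'n) \<times> real)) \<notin> convex hull L" using Lsnd by auto
    ultimately show "0 \<in> rel_interior (convex hull L) \<or> compact (convex hull L) \<and> 0 \<notin> convex hull L"
      by blast
  qed
  define V where "V = {t. (\<rho>, t) \<in> K}"
  have cV: "closed V"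
  proof -
    have "V = (\<lambda>t. (\<rho>, t)) -` K" unfolding V_def by auto
    moreover have "continuous_on UNIV (\<lambda>t::real. (\<rho>, t))" by (intro continuous_intros)
    ultimately show ?thesis using cK closed_vimage by metis
  qed
  have inj: "inj_on (\<lambda>v. (v, 1::real)) S0" by (auto simp: inj_on_def)
  have feas2V: "sum c S0 \<in> V" if nn: "\<forall>v\<in>S0. 0 \<le> c v" and eq: "(\<Sum>v\<in>S0. c v *\<^sub>R v) = \<rho>" for c
  proof -
    define t where "t = sum c S0"
    have "t \<noteq> 0"
    proof
      assume "t = 0"
      then have "\<forall>v\<in>S0. c v = 0" using sum_nonneg_eq_0_iff[OF fin] nn unfolding t_def by blast
      then have "(\<Sum>v\<in>S0. c v *\<^sub>R v) = 0" by simp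
      then show False using eq rho0 by simp
    qed
    moreover have "t \<ge> 0" unfolding t_def using nn by (simp add: sum_nonneg)
    ultimately have tpos: "t > 0" by simp
    define z where "z = (\<Sum>v\<in>S0. (c v / t) *\<^sub>R (v, 1::real))"
    have zin: "z \<in> convex hull L" unfolding z_def
    proof (rule convex_sum[OF fin convex_convex_hull])
      show "(\<Sum>v\<in>S0. c v / t) = 1" using tpos unfolding t_def by (simp add: sum_divide_distrib[symmetric])
      show "\<And>i. i \<in> S0 \<Longrightarrow> 0 \<le> c i / t" using nn tpos by simp
      show "\<And>i. i \<in> S0 \<Longrightarrow> (i, 1) \<in> convex hull L" unfolding L_def by (rule hull_inc) auto
    qed
    have "fst z = (\<Sum>v\<in>S0. (1/t) *\<^sub>R (c v *\<^sub>R v))" unfolding z_def fst_sum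
      by (intro sum.cong) auto
    also have "\<dots> = (1/t) *\<^sub>R (\<Sum>v\<in>S0. c v *\<^sub>R v)" by (rule scaleR_sum_right[symmetric])
    also have "\<dots> = (1/t) *\<^sub>R \<rho>" using eq by simp
    finally have "fst z = (1/t) *\<^sub>R \<rho>" .
    moreover have "snd z = 1" unfolding z_def snd_sum using tpos unfolding t_def
      by (simp add: sum_divide_distrib[symmetric])
    ultimately have "t *\<^sub>R z = (\<rho>, t)" using tpos by (simp add: prod_eq_iff)
    then have "(\<rho>, t) \<in> K" unfolding K_def conic_hull_explicit using zin tpos
      by (metis (mono_tags, lifting) less_imp_le mem_Collect_eq)
    then show ?thesis unfolding V_def t_def by simp
  qed
  have V2feas: "\<exists>c. (\<forall>v\<in>S0. 0 \<le> c v) \<and> (\<Sum>v\<in>S0. c v *\<^sub>R v) = \<rho> \<and> sum c S0 = t" if tV: "t \<in> V" for t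
  proof -
    obtain lam x where lx: "(\<rho>, t) = lam *\<^sub>R x" "0 \<le> lam" "x \<in> convex hull L"
      using tV unfolding V_def K_def conic_hull_explicit by blast
    obtain u where u: "\<forall>w\<in>L. 0 \<le> u w" "sum u L = 1" "(\<Sum>w\<in>L. u w *\<^sub>R w) = x"
      using lx(3) unfolding convex_hull_finite[OF finL] by blast
    define c where "c v = lam * u (v, 1)" for v
    have x2: "x = (\<Sum>v\<in>S0. u (v,1) *\<^sub>R (v, 1::real))"
      using u(3) unfolding L_def sum.reindex[OF inj] by (simp add: o_def)
    have s1: "(\<Sum>v\<in>S0. u (v,1)) = 1" using u(2) unfolding L_def sum.reindex[OF inj] by (simp add: o_def)
    have "fst x = (\<Sum>v\<in>S0. u (v,1) *\<^sub>R v)" unfolding x2 fst_sum by simp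
    moreover have "snd x = 1" using lx(3) Lsnd by auto
    moreover have "\<rho> = lam *\<^sub>R fst x" "t = lam * snd x" using lx(1) by (simp_all add: prod_eq_iff)
    ultimately have r: "\<rho> = (\<Sum>v\<in>S0. c v *\<^sub>R v)" and tl: "t = lam"
      unfolding c_def by (simp_all add: scaleR_sum_right)
    have "sum c S0 = lam" unfolding c_def using s1 by (simp add: sum_distrib_left[symmetric])
    moreover have "\<forall>v\<in>S0. 0 \<le> c v" unfolding c_def using u(1) lx(2) unfolding L_def by auto
    ultimately show ?thesis using r tl by auto
  qed
  obtain c0 where c0: "\<forall>v\<in>S0. 0 \<le> c0 v" "(\<Sum>v\<in>S0. c0 v *\<^sub>R v) = \<rho>" using ex by blast
  have Vne: "V \<noteq> {}" using feas2V[OF c0] by blast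
  have bdd: "bdd_below V"
  proof (rule bdd_belowI)
    fix t assume "t \<in> V"
    then obtain c where "\<forall>v\<in>S0. 0 \<le> c v" "sum c S0 = t" using V2feas by blast
    then show "0 \<le> t" by (metis sum_nonneg)
  qed
  have "Inf V \<in> V" using closed_contains_Inf[OF Vne bdd cV] .
  then obtain c where c: "\<forall>v\<in>S0. 0 \<le> c v" "(\<Sum>v\<in>S0. c v *\<^sub>R v) = \<rho>" "sum c S0 = Inf V"
    using V2feas by blast
  have "\<forall>c'. (\<forall>v\<in>S0. 0 \<le> c' v) \<and> (\<Sum>v\<in>S0. c' v *\<^sub>R v) = \<rho> \<longrightarrow> sum c S0 \<le> sum c' S0"
    using feas2V c(3) cInf_lower[OF _ bdd] by auto
  then show ?thesis using c by blast
qed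

theorem lemma3p3:
  fixes R :: "(real^'n) set" and \<Sigma> :: "(real^'n) set set" and \<rho> :: "real^'n"
  assumes "smooth_complete_fan R \<Sigma>"
    and "toric_fano R \<Sigma>"
    and "all_toric_subvarieties_fano R \<Sigma>"
    and "\<rho> \<in> R"
    and "\<rho> \<in> pos_hull (R - {\<rho>})"
  shows "exceptional R \<Sigma> \<rho>"
proof -
  note fan = assms(1)
  have allf: "\<forall>\<tau>\<in>\<Sigma>. orbit_closure_fano R \<Sigma> \<tau>"
    using assms(3) unfolding all_toric_subvarieties_fano_def .
  define S0 where "S0 = R - {\<rho>}"
  have finS0: "finite S0" unfolding S0_def using finR[OF fan] by simp
  have "independent {\<rho>}" using cone_indep[OF fan single_in[OF fan assms(4)]] .
  then have rho0: "\<rho> \<noteq> 0" using dependent_zero by blast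
  have ex: "\<exists>c. (\<forall>v\<in>S0. 0 \<le> c v) \<and> (\<Sum>v\<in>S0. c v *\<^sub>R v) = \<rho>"
    using assms(5) unfolding pos_hull_def S0_def by auto
  obtain c where c: "\<forall>v\<in>S0. 0 \<le> c v" "(\<Sum>v\<in>S0. c v *\<^sub>R v) = \<rho>"
    and cmin: "\<forall>c'. (\<forall>v\<in>S0. 0 \<le> c' v) \<and> (\<Sum>v\<in>S0. c' v *\<^sub>R v) = \<rho> \<longrightarrow> sum c S0 \<le> sum c' S0"
    using min_total[OF finS0 rho0 ex] by blast
  define S where "S = {v\<in>S0. c v > 0}"
  have SS0: "S \<subseteq> S0" unfolding S_def by auto
  have finS: "finite S" using finS0 SS0 finite_subset by blast
  have rhoS: "\<rho> = (\<Sum>v\<in>S. c v *\<^sub>R v)"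
    unfolding c(2)[symmetric] using c(1) unfolding S_def
    by (intro sum.mono_neutral_right[OF finS0]) force+
  have SnS: "S \<notin> \<Sigma>"
  proof
    assume SS: "S \<in> \<Sigma>"
    have "(\<Sum>v\<in>S. c v *\<^sub>R v) \<in> pos_hull S" using c(1) SS0 by (intro pos_hullI[OF fan]) auto
    then have "(\<Sum>v\<in>{\<rho>}. (\<lambda>_. 1::real) v *\<^sub>R v) \<in> pos_hull S" using rhoS by simp
    then have "{\<rho>} \<subseteq> S" using support[OF fan single_in[OF fan assms(4)] SS, of "\<lambda>_. 1"] by simp
    then show False using SS0 unfolding S0_def by blast
  qed
  have "\<exists>P. (P \<subseteq> S \<and> P \<notin> \<Sigma>) \<and> (\<forall>Q. Q \<subseteq> S \<and> Q \<notin> \<Sigma> \<longrightarrow> card P \<le> card Q)"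
    using ex_has_least_nat[of "\<lambda>P. P \<subseteq> S \<and> P \<notin> \<Sigma>" S card] SnS by simp
  then obtain P where P: "P \<subseteq> S \<and> P \<notin> \<Sigma>" and Pmin: "\<forall>Q. Q \<subseteq> S \<and> Q \<notin> \<Sigma> \<longrightarrow> card P \<le> card Q"
    by blast
  have finP: "finite P" using P finS finite_subset by blast
  have PR: "P \<subseteq> R" using P SS0 unfolding S0_def by blast
  have sub: "\<forall>Q. Q \<subset> P \<longrightarrow> Q \<in> \<Sigma>"
  proof (intro allI impI)
    fix Q assume "Q \<subset> P"
    then have lt: "card Q < card P" and QS: "Q \<subseteq> S" using psubset_card_mono[OF finP] P by auto
    show "Q \<in> \<Sigma>"
    proof (rule ccontr)
      assume "Q \<notin> \<Sigma>"
      then have "card P \<le> card Q" using Pmin QS by blast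
      then show False using lt by simp
    qed
  qed
  have Pne: "P \<noteq> {}" using P empty_in[OF fan] by blast
  have card2: "2 \<le> card P"
  proof -
    have "card P \<noteq> 0" using finP Pne by simp
    moreover have "card P \<noteq> 1"
    proof
      assume "card P = 1"
      then obtain x where "P = {x}" by (rule card_1_singletonE)
      then show False using P PR single_in[OF fan] by auto
    qed
    ultimately show ?thesis by linarith
  qed
  have p1: "P \<inter> {} = {}" by simp
  have p2: "P \<union> {} \<notin> \<Sigma>" using P by simp
  have p3: "\<forall>Q. Q \<subset> P \<longrightarrow> Q \<union> {} \<in> \<Sigma>" using sub by simp
  obtain \<epsilon> y lam where res: "\<epsilon> = 0 \<or> (\<epsilon> = 1 \<and> insert y {} \<in> \<Sigma> \<and> y \<notin> {})"
      "(\<Sum>x\<in>P. x) = \<epsilon> *\<^sub>R y + (\<Sum>t\<in>{}. lam t *\<^sub>R t)"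
    using relC[OF fan allf refl card2 empty_in[OF fan] PR p1 p2 p3] by blast
  have sP: "(\<Sum>x\<in>P. x) = \<epsilon> *\<^sub>R y" using res(2) by simp
  show ?thesis
  proof (cases "\<epsilon> = 1 \<and> y = \<rho>")
    case True
    then show ?thesis unfolding exceptional_def primitive_set_def
      using assms(4) PR P sub sP by auto
  next
    case False
    have eps: "0 \<le> \<epsilon>" "\<epsilon> \<le> 1" using res(1) by auto
    have yS0: "y \<in> S0" if "\<epsilon> = 1"
    proof -
      have "{y} \<in> \<Sigma>" using res(1) that by auto
      then have "y \<in> R" using SigmaR[OF fan] by blast
      moreover have "y \<noteq> \<rho>" using False that by blast
      ultimately show ?thesis unfolding S0_def by blast
    qed
    define t where "t = Min (c ` P)"
    have tin: "t \<in> c ` P" unfolding t_def using finP Pne by (intro Min_in) auto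
    have tpos: "t > 0" using tin P unfolding S_def by auto
    have tle: "t \<le> c x" if "x \<in> P" for x unfolding t_def using finP that by (intro Min_le) auto
    define c' where "c' v = c v - (if v \<in> P then t else 0) + (if v = y then \<epsilon> * t else 0)" for v
    have PS0: "P \<subseteq> S0" using P SS0 by blast
    have nn: "\<forall>v\<in>S0. 0 \<le> c' v"
    proof
      fix v assume v: "v \<in> S0"
      have a: "0 \<le> c v - (if v \<in> P then t else 0)" using tle c(1) v by auto
      have b: "0 \<le> (if v = y then \<epsilon> * t else 0)" using eps tpos by auto
      show "0 \<le> c' v" unfolding c'_def using a b by linarith
    qed
    have yterm: "(\<Sum>v\<in>S0. (if v = y then \<epsilon> * t else 0) *\<^sub>R v) = (\<epsilon> * t) *\<^sub>R y"
    proof (cases "\<epsilon> = 1")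
      case True
      have "(\<Sum>v\<in>S0. (if v = y then \<epsilon> * t else 0) *\<^sub>R v) = (\<Sum>v\<in>S0. if v = y then (\<epsilon> * t) *\<^sub>R v else 0)"
        by (intro sum.cong) auto
      also have "\<dots> = (\<epsilon> * t) *\<^sub>R y"
        using sum.delta[OF finS0, of y "\<lambda>v. (\<epsilon> * t) *\<^sub>R v"] yS0[OF True] by simp
      finally show ?thesis .
    next
      case False
      then have e0: "\<epsilon> = 0" using res(1) by auto
      show ?thesis unfolding e0 by (simp cong: if_cong)
    qed
    have yterm2: "(\<Sum>v\<in>S0. (if v = y then \<epsilon> * t else 0)) = \<epsilon> * t"
    proof (cases "\<epsilon> = 1")
      case True
      then show ?thesis using sum.delta[OF finS0, of y "\<lambda>_. \<epsilon> * t"] yS0[OF True] by simp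
    next
      case False
      then have e0: "\<epsilon> = 0" using res(1) by auto
      show ?thesis unfolding e0 by (simp cong: if_cong)
    qed
    have Pterm: "(\<Sum>v\<in>S0. (if v \<in> P then t else 0) *\<^sub>R v) = t *\<^sub>R (\<epsilon> *\<^sub>R y)"
    proof -
      have "(\<Sum>v\<in>S0. (if v \<in> P then t else 0) *\<^sub>R v) = (\<Sum>v\<in>P. t *\<^sub>R v)"
        using extend_sum[OF finS0 PS0, of "\<lambda>_. t" "\<lambda>v. v"] by simp
      also have "\<dots> = t *\<^sub>R (\<Sum>v\<in>P. v)" by (simp add: scaleR_sum_right)
      finally show ?thesis using sP by simp
    qed
    have Pterm2: "(\<Sum>v\<in>S0. (if v \<in> P then t else 0)) = t * card P"
    proof -
      have "(\<Sum>v\<in>S0. (if v \<in> P then t else 0)) = (\<Sum>v\<in>S0 \<inter> P. t)"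
        by (rule sum.inter_restrict[OF finS0, symmetric])
      also have "S0 \<inter> P = P" using PS0 by blast
      finally show ?thesis by simp
    qed
    have eq': "(\<Sum>v\<in>S0. c' v *\<^sub>R v) = \<rho>"
    proof -
      have "(\<Sum>v\<in>S0. c' v *\<^sub>R v) = (\<Sum>v\<in>S0. c v *\<^sub>R v) - (\<Sum>v\<in>S0. (if v \<in> P then t else 0) *\<^sub>R v)
            + (\<Sum>v\<in>S0. (if v = y then \<epsilon> * t else 0) *\<^sub>R v)"
        unfolding c'_def by (simp add: scaleR_add_left scaleR_diff_left sum.distrib sum_subtractf)
      then show ?thesis using c(2) yterm Pterm by simp
    qed
    have sum': "sum c' S0 = sum c S0 - t * card P + \<epsilon> * t"
    proof -
      have "sum c' S0 = sum c S0 - (\<Sum>v\<in>S0. (if v \<in> P then t else 0)) + (\<Sum>v\<in>S0. (if v = y then \<epsilon> * t else 0))"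
        unfolding c'_def by (simp add: sum.distrib sum_subtractf)
      then show ?thesis using yterm2 Pterm2 by simp
    qed
    have "sum c S0 \<le> sum c' S0" using cmin nn eq' by blast
    moreover have "t * card P \<ge> 2 * t" using card2 tpos by simp
    moreover have "\<epsilon> * t \<le> t" using eps tpos by simp
    ultimately show ?thesis using sum' tpos by linarith
  qed
qed


end
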